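(* Let $\Gamma$ be a strongly regular graph. Then $E(\Gamma)=E(\bar\Gamma)$ and $\Gamma$, $\bar\Gamma$ are not isospectral if and only if $\Gamma$ has $OA(n,m)$ parameters, i.e. parameters $(n^2, m(n-1), m^2-3m+n, m(m-1))$, for some positive integers $n,m$ with $m\neq n+1$ and $m\neq \tfrac{n+1}{2}$.
   Context: A strongly regular graph with parameters $(n,k,e,d)$ is a $k$-regular simple graph on $n$ vertices, neither complete nor edgeless, in which adjacent vertices have $e$ common neighbours and distinct non-adjacent vertices have $d$ common neighbours. $\bar\Gamma$ is the complement. The energy $E$ is the sum of the absolute values of the adjacency eigenvalues (with multiplicity); isospectral means equal adjacency spectra with multiplicities. *)

theory Defs
  imports "Jordan_Normal_Form.Char_Poly"
begin

definition simple_graph :: "nat \<Rightarrow> (nat \<Rightarrow> nat \<Rightarrow> bool) \<Rightarrow> bool" where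
  "simple_graph N E \<longleftrightarrow>
     (\<forall>i<N. \<forall>j<N. E i j \<longleftrightarrow> E j i) \<and> (\<forall>i<N. \<not> E i i)"

definition complement :: "(nat \<Rightarrow> nat \<Rightarrow> bool) \<Rightarrow> nat \<Rightarrow> nat \<Rightarrow> bool" where
  "complement E i j \<longleftrightarrow> i \<noteq> j \<and> \<not> E i j"

definition srg_params ::
  "nat \<Rightarrow> (nat \<Rightarrow> nat \<Rightarrow> bool) \<Rightarrow> nat \<Rightarrow> nat \<Rightarrow> nat \<Rightarrow> bool" where
  "srg_params N E k e d \<longleftrightarrow>
     simple_graph N E \<and>
     (\<exists>i<N. \<exists>j<N. E i j) \<and>
     (\<exists>i<N. \<exists>j<N. i \<noteq> j \<and> \<not> E i j) \<and>
     (\<forall>i<N. card {x. x < N \<and> E i x} = k) \<and>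
     (\<forall>i<N. \<forall>j<N. E i j \<longrightarrow> card {x. x < N \<and> E i x \<and> E j x} = e) \<and>
     (\<forall>i<N. \<forall>j<N. i \<noteq> j \<and> \<not> E i j \<longrightarrow> card {x. x < N \<and> E i x \<and> E j x} = d)"

definition strongly_regular :: "nat \<Rightarrow> (nat \<Rightarrow> nat \<Rightarrow> bool) \<Rightarrow> bool" where
  "strongly_regular N E \<longleftrightarrow> (\<exists>k e d. srg_params N E k e d)"

definition adj_matrix :: "nat \<Rightarrow> (nat \<Rightarrow> nat \<Rightarrow> bool) \<Rightarrow> complex mat" where
  "adj_matrix N E = mat N N (\<lambda>(i, j). if E i j then 1 else 0)"

definition adj_spectrum :: "nat \<Rightarrow> (nat \<Rightarrow> nat \<Rightarrow> bool) \<Rightarrow> complex multiset" where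
  "adj_spectrum N E = proots (char_poly (adj_matrix N E))"

definition energy :: "nat \<Rightarrow> (nat \<Rightarrow> nat \<Rightarrow> bool) \<Rightarrow> real" where
  "energy N E = sum_mset (image_mset cmod (adj_spectrum N E))"

definition isospectral ::
  "nat \<Rightarrow> (nat \<Rightarrow> nat \<Rightarrow> bool) \<Rightarrow> nat \<Rightarrow> (nat \<Rightarrow> nat \<Rightarrow> bool) \<Rightarrow> bool" where
  "isospectral N E N' E' \<longleftrightarrow> adj_spectrum N E = adj_spectrum N' E'"

end

theory Submission
  imports Defs "Jordan_Normal_Form.Schur_Decomposition"
begin


definition tr :: "complex mat \<Rightarrow> complex" where
  "tr X = (\<Sum>i\<in>{0..<dim_row X}. X $$ (i,i))"

lemma tr_comm: assumes X: "X \<in> carrier_mat n m" and Y: "Y \<in> carrier_mat m n"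
  shows "tr (X * Y) = tr (Y * X)"
proof -
  have 1: "tr (X*Y) = (\<Sum>i\<in>{0..<n}. \<Sum>j\<in>{0..<m}. X$$(i,j) * Y$$(j,i))"
    using X Y by (simp add: tr_def scalar_prod_def)
  have 2: "tr (Y*X) = (\<Sum>j\<in>{0..<m}. \<Sum>i\<in>{0..<n}. Y$$(j,i) * X$$(i,j))"
    using X Y by (simp add: tr_def scalar_prod_def)
  show ?thesis unfolding 1 2 by (subst sum.swap) (simp add: mult.commute)
qed

lemma tr_sim: assumes A: "A \<in> carrier_mat n n" and S: "similar_mat_wit A B P Q"
  shows "tr A = tr B"
proof -
  note D = similar_mat_witD2[OF A S]
  have "tr A = tr (P * B * Q)" using D by simp
  also have "\<dots> = tr (Q * (P * B))" by (rule tr_comm[of _ n n], insert D, auto)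
  also have "Q * (P * B) = (Q * P) * B" using D by (metis assoc_mult_mat)
  also have "\<dots> = B" using D by simp
  finally show ?thesis .
qed

lemma tr_upper_sq: assumes B: "B \<in> carrier_mat n n" and U: "upper_triangular B"
  shows "tr (B * B) = (\<Sum>i\<in>{0..<n}. (B $$ (i,i))^2)"
proof -
  have "tr (B*B) = (\<Sum>i\<in>{0..<n}. \<Sum>j\<in>{0..<n}. B$$(i,j) * B$$(j,i))"
    using B by (simp add: tr_def scalar_prod_def)
  also have "\<dots> = (\<Sum>i\<in>{0..<n}. (B $$ (i,i))^2)"
  proof (rule sum.cong[OF refl])
    fix i assume i: "i \<in> {0..<n}"
    have "(\<Sum>j\<in>{0..<n}. B$$(i,j) * B$$(j,i)) = (\<Sum>j\<in>{0..<n}. if j = i then (B $$ (i,i))^2 else 0)"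
    proof (rule sum.cong[OF refl])
      fix j assume j: "j \<in> {0..<n}"
      show "B$$(i,j) * B$$(j,i) = (if j = i then (B $$ (i,i))^2 else 0)"
        using U B i j unfolding upper_triangular_def
        by (cases "j < i"; cases "i < j") (auto simp: power2_eq_square)
    qed
    also have "\<dots> = (B $$ (i,i))^2" using i by simp
    finally show "(\<Sum>j\<in>{0..<n}. B$$(i,j) * B$$(j,i)) = (B $$ (i,i))^2" .
  qed
  finally show ?thesis .
qed

lemma roots_schur:
  fixes A :: "complex mat"
  assumes A: "A \<in> carrier_mat n n"
  shows "\<exists>as. proots (char_poly A) = mset as \<and> length as = n \<and>
     sum_list as = tr A \<and> sum_list (map (\<lambda>x. x^2) as) = tr (A * A) \<and>
     (\<forall>x \<in> set as. eigenvalue A x)"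
proof -
  obtain as where cp: "char_poly A = (\<Prod> a \<leftarrow> as. [:- a, 1:])" and len: "length as = n"
    using char_poly_factorized[OF A] by blast
  have pr: "proots (char_poly A) = mset as" unfolding cp
  proof (induct as)
    case (Cons a as)
    have "monic (\<Prod>a\<leftarrow>as. [:- a, 1:])" by (rule monic_prod_list) auto
    hence "(\<Prod>a\<leftarrow>as. [:- a, 1:]) \<noteq> 0" by auto
    have eq: "(\<Prod>x\<leftarrow>a#as. [:- x, 1:]) = [:- a, 1:] * (\<Prod>x\<leftarrow>as. [:- x, 1:])" by simp
    show ?case unfolding eq by (subst proots_mult) (use Cons \<open>_ \<noteq> 0\<close> in auto)
  qed simp
  obtain B P Q where sd: "schur_decomposition A as = (B,P,Q)" by (cases "schur_decomposition A as") auto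
  from schur_decomposition[OF A cp sd] have S: "similar_mat_wit A B P Q" and U: "upper_triangular B"
    and dg: "diag_mat B = as" by auto
  note D = similar_mat_witD2[OF A S]
  have Bc: "B \<in> carrier_mat n n" using D by auto
  have s1: "sum_list as = tr B" unfolding dg[symmetric] diag_mat_def tr_def
    by (simp add: interv_sum_list_conv_sum_set_nat)
  have s2: "sum_list (map (\<lambda>x. x^2) as) = tr (B * B)" unfolding tr_upper_sq[OF Bc U]
    unfolding dg[symmetric] diag_mat_def using Bc
    by (simp add: interv_sum_list_conv_sum_set_nat o_def)
  have AA: "A * A = P * (B * B) * Q"
    using similar_mat_wit_pow_id[OF S, of 2] D by (simp add: numeral_2_eq_2)
  have SS: "similar_mat_wit (A * A) (B * B) P Q"
    by (rule similar_mat_witI[of _ _ n], insert D AA, auto)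
  have t1: "tr A = tr B" by (rule tr_sim[OF A S])
  have t2: "tr (A * A) = tr (B * B)" by (rule tr_sim[OF _ SS], insert A, auto)
  have ev: "\<forall>x \<in> set as. eigenvalue A x"
  proof
    fix x assume "x \<in> set as"
    hence "poly (char_poly A) x = 0" unfolding cp by (induct as) auto
    thus "eigenvalue A x" using eigenvalue_root_char_poly[OF A] by simp
  qed
  show ?thesis using pr len s1 s2 t1 t2 ev by metis
qed

lemma card_sum: "(\<Sum>x\<in>{0..<(N::nat)}. if P x then (1::'a::semiring_1) else 0) = of_nat (card {x. x<N \<and> P x})"
proof -
  have "(\<Sum>x\<in>{0..<N}. if P x then (1::'a) else 0) = (\<Sum>x\<in>{x\<in>{0..<N}. P x}. 1)"
    by (rule sum.inter_filter[symmetric]) simp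
  also have "\<dots> = of_nat (card {x\<in>{0..<N}. P x})" by simp
  also have "{x\<in>{0..<N}. P x} = {x. x<N \<and> P x}" by auto
  finally show ?thesis .
qed

lemma adj_carrier: "adj_matrix N E \<in> carrier_mat N N"
  by (simp add: adj_matrix_def)

lemma adj_entry: "i < N \<Longrightarrow> j < N \<Longrightarrow> adj_matrix N E $$ (i,j) = (if E i j then 1 else 0)"
  by (simp add: adj_matrix_def)

lemma AA_entry:
  assumes S: "srg_params N E k e d" and i: "i < N" and j: "j < N"
  shows "(adj_matrix N E * adj_matrix N E) $$ (i,j) =
    (if i = j then of_nat k else if E i j then of_nat e else of_nat d)"
proof -
  let ?A = "adj_matrix N E"
  have sg: "simple_graph N E" using S by (simp add: srg_params_def)
  have "(?A * ?A) $$ (i,j) = (\<Sum>l\<in>{0..<N}. ?A $$ (i,l) * ?A $$ (l,j))"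
    using i j by (simp add: adj_matrix_def scalar_prod_def)
  also have "\<dots> = (\<Sum>l\<in>{0..<N}. if E i l \<and> E j l then 1 else 0)"
    using sg i j by (intro sum.cong refl) (auto simp: adj_entry simple_graph_def)
  also have "\<dots> = of_nat (card {x. x<N \<and> E i x \<and> E j x})" by (rule card_sum)
  finally have c: "(?A * ?A) $$ (i,j) = of_nat (card {x. x<N \<and> E i x \<and> E j x})" .
  show ?thesis
  proof (cases "i = j")
    case True
    then show ?thesis using c S i by (simp add: srg_params_def)
  next
    case False
    then show ?thesis using c S i j by (auto simp add: srg_params_def)
  qed
qed

lemma row_lemma:
  assumes S: "srg_params N E k e d" and v: "v \<in> carrier_vec N" and i: "i < N"
  shows "(adj_matrix N E *\<^sub>v (adj_matrix N E *\<^sub>v v)) $ i =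
     of_nat k * v $ i + of_nat e * (adj_matrix N E *\<^sub>v v) $ i
     + of_nat d * ((\<Sum>l\<in>{0..<N}. v $ l) - v $ i - (adj_matrix N E *\<^sub>v v) $ i)"
proof -
  let ?A = "adj_matrix N E"
  have sg: "simple_graph N E" using S by (simp add: srg_params_def)
  have Av: "(?A *\<^sub>v v) $ i = (\<Sum>l\<in>{0..<N}. ?A $$ (i,l) * v $ l)"
    using i v by (simp add: adj_matrix_def scalar_prod_def)
  have "(?A *\<^sub>v (?A *\<^sub>v v)) $ i = ((?A * ?A) *\<^sub>v v) $ i"
    using v by (subst assoc_mult_mat_vec[of _ N N _ N]) (auto simp: adj_carrier)
  also have "\<dots> = (\<Sum>l\<in>{0..<N}. (?A * ?A) $$ (i,l) * v $ l)"
    using i v by (simp add: adj_matrix_def scalar_prod_def)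
  also have "\<dots> = (\<Sum>l\<in>{0..<N}. of_nat k * (if l = i then v $ l else 0) + of_nat e * (?A $$ (i,l) * v $ l)
       + of_nat d * (v $ l - (if l = i then v $ l else 0) - ?A $$ (i,l) * v $ l))"
    using sg i by (intro sum.cong refl) (auto simp: AA_entry[OF S] adj_entry simple_graph_def algebra_simps)
  also have "\<dots> = of_nat k * (\<Sum>l\<in>{0..<N}. (if l = i then v $ l else 0)) + of_nat e * (\<Sum>l\<in>{0..<N}. ?A $$ (i,l) * v $ l)
       + of_nat d * ((\<Sum>l\<in>{0..<N}. v $ l) - (\<Sum>l\<in>{0..<N}. (if l = i then v $ l else 0)) - (\<Sum>l\<in>{0..<N}. ?A $$ (i,l) * v $ l))"
  proof -
    have "(\<Sum>l\<in>{0..<N}. v $ l) - (\<Sum>l\<in>{0..<N}. (if l = i then v $ l else 0)) - (\<Sum>l\<in>{0..<N}. ?A $$ (i,l) * v $ l)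
      = (\<Sum>l\<in>{0..<N}. v $ l - (if l = i then v $ l else 0) - ?A $$ (i,l) * v $ l)"
      by (simp only: sum_subtractf)
    then show ?thesis by (simp only: sum.distrib sum_distrib_left)
  qed
  also have "(\<Sum>l\<in>{0..<N}. (if l = i then v $ l else 0)) = v $ i" using i by simp
  finally show ?thesis unfolding Av by simp
qed


lemma col_sum:
  assumes S: "srg_params N E k e d" and v: "v \<in> carrier_vec N"
  shows "(\<Sum>i\<in>{0..<N}. (adj_matrix N E *\<^sub>v v) $ i) = of_nat k * (\<Sum>l\<in>{0..<N}. v $ l)"
proof -
  let ?A = "adj_matrix N E"
  have sg: "simple_graph N E" using S by (simp add: srg_params_def)
  have "(\<Sum>i\<in>{0..<N}. (?A *\<^sub>v v) $ i) = (\<Sum>i\<in>{0..<N}. \<Sum>l\<in>{0..<N}. ?A $$ (i,l) * v $ l)"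
    using v by (intro sum.cong refl) (simp add: adj_matrix_def scalar_prod_def)
  also have "\<dots> = (\<Sum>l\<in>{0..<N}. v $ l * (\<Sum>i\<in>{0..<N}. ?A $$ (i,l)))"
    by (subst sum.swap) (simp add: sum_distrib_left mult.commute)
  also have "\<dots> = (\<Sum>l\<in>{0..<N}. v $ l * of_nat k)"
  proof (intro sum.cong refl)
    fix l assume l: "l \<in> {0..<N}"
    have "(\<Sum>i\<in>{0..<N}. ?A $$ (i,l)) = (\<Sum>i\<in>{0..<N}. if E l i then 1 else 0)"
      using l sg by (intro sum.cong refl) (auto simp: adj_entry simple_graph_def)
    also have "\<dots> = of_nat (card {x. x<N \<and> E l x})" by (rule card_sum)
    also have "\<dots> = of_nat k" using S l by (simp add: srg_params_def)
    finally show "v $ l * (\<Sum>i\<in>{0..<N}. ?A $$ (i,l)) = v $ l * of_nat k" by simp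
  qed
  finally show ?thesis by (simp add: sum_distrib_left mult.commute)
qed

lemma eigen_cubic:
  assumes S: "srg_params N E k e d" and ev: "eigenvalue (adj_matrix N E) x"
  shows "(x - of_nat k) * (x^2 - (of_nat e - of_nat d) * x - (of_nat k - of_nat d)) = 0"
proof -
  let ?A = "adj_matrix N E"
  obtain v where v: "v \<in> carrier_vec N" and v0: "v \<noteq> 0\<^sub>v N" and Av: "?A *\<^sub>v v = x \<cdot>\<^sub>v v"
    using ev unfolding eigenvalue_def eigenvector_def by (auto simp: adj_matrix_def)
  define s where "s = (\<Sum>l\<in>{0..<N}. v $ l)"
  have Avi: "(?A *\<^sub>v v) $ i = x * v $ i" if "i < N" for i using that v Av by simp
  have AAvi: "(?A *\<^sub>v (?A *\<^sub>v v)) $ i = x * (x * v $ i)" if "i < N" for i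
    using that v Av mult_mat_vec[OF adj_carrier v] by simp
  have row: "x * (x * v $ i) = of_nat k * v $ i + of_nat e * (x * v $ i) + of_nat d * (s - v $ i - x * v $ i)"
    if "i < N" for i
    using row_lemma[OF S v that] AAvi[OF that] Avi[OF that] unfolding s_def by simp
  have "x * s = (\<Sum>i\<in>{0..<N}. (?A *\<^sub>v v) $ i)" unfolding s_def
    by (simp add: Avi sum_distrib_left)
  also have "\<dots> = of_nat k * s" using col_sum[OF S v] unfolding s_def by simp
  finally have xs: "x * s = of_nat k * s" .
  show ?thesis
  proof (cases "x = of_nat k")
    case True then show ?thesis by simp
  next
    case False
    with xs have s0: "s = 0" by simp
    obtain i where i: "i < N" and vi: "v $ i \<noteq> 0"
      using v v0 by (metis carrier_vecD eq_vecI index_zero_vec(1) index_zero_vec(2))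
    have "(x^2 - (of_nat e - of_nat d) * x - (of_nat k - of_nat d)) * v $ i = 0"
      using row[OF i] s0 by (simp add: algebra_simps power2_eq_square)
    then show ?thesis using vi by simp
  qed
qed

lemma srg_identity:
  assumes S: "srg_params N E k e d"
  shows "int k * (int k - int e - 1) = (int N - int k - 1) * int d"
proof -
  let ?A = "adj_matrix N E"
  define v :: "complex vec" where "v = vec N (\<lambda>_. 1)"
  have v: "v \<in> carrier_vec N" by (simp add: v_def)
  have sg: "simple_graph N E" using S by (simp add: srg_params_def)
  obtain i where i: "i < N" using S by (auto simp: srg_params_def)
  have Av: "?A *\<^sub>v v = of_nat k \<cdot>\<^sub>v v"
  proof (rule eq_vecI)
    fix j assume j: "j < dim_vec (of_nat k \<cdot>\<^sub>v v)"
    hence j: "j < N" by (simp add: v_def)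
    have "(?A *\<^sub>v v) $ j = (\<Sum>l\<in>{0..<N}. if E j l then 1 else 0)"
      using j by (simp add: adj_matrix_def scalar_prod_def v_def)
    also have "\<dots> = of_nat (card {x. x<N \<and> E j x})" by (rule card_sum)
    also have "\<dots> = of_nat k" using S j by (simp add: srg_params_def)
    finally show "(?A *\<^sub>v v) $ j = (of_nat k \<cdot>\<^sub>v v) $ j" using j by (simp add: v_def)
  qed (simp add: adj_matrix_def v_def)
  have "(?A *\<^sub>v (?A *\<^sub>v v)) $ i = of_nat k * of_nat k"
    unfolding Av mult_mat_vec[OF adj_carrier v] using i Av by (simp add: v_def)
  moreover have "(\<Sum>l\<in>{0..<N}. v $ l) = of_nat N" by (simp add: v_def)
  ultimately have "(of_nat k * of_nat k :: complex) = of_nat k + of_nat e * of_nat k + of_nat d * (of_nat N - 1 - of_nat k)"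
    using row_lemma[OF S v i] i Av by (simp add: v_def)
  hence "complex_of_int (int k * (int k - int e - 1)) = complex_of_int ((int N - int k - 1) * int d)"
    by (simp add: algebra_simps)
  thus ?thesis using of_int_eq_iff by blast
qed

lemma tr_A: assumes S: "srg_params N E k e d"
  shows "tr (adj_matrix N E) = 0" "tr (adj_matrix N E * adj_matrix N E) = of_nat N * of_nat k"
proof -
  have sg: "simple_graph N E" using S by (simp add: srg_params_def)
  show "tr (adj_matrix N E) = 0" using sg by (simp add: tr_def adj_matrix_def simple_graph_def)
  have "tr (adj_matrix N E * adj_matrix N E) = (\<Sum>i\<in>{0..<N}. of_nat k)"
  proof -
    have "dim_row (adj_matrix N E * adj_matrix N E) = N" by (simp add: adj_matrix_def)
    thus ?thesis unfolding tr_def by (intro sum.cong) (auto simp: AA_entry[OF S])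
  qed
  thus "tr (adj_matrix N E * adj_matrix N E) = of_nat N * of_nat k" by simp
qed

lemma spectral:
  assumes S: "srg_params N E k e d"
  shows "size (adj_spectrum N E) = N"
   "\<forall>x \<in># adj_spectrum N E. (x - of_nat k) * (x^2 - (of_nat e - of_nat d) * x - (of_nat k - of_nat d)) = 0"
   "sum_mset (adj_spectrum N E) = 0"
   "sum_mset (image_mset (\<lambda>x. x^2) (adj_spectrum N E)) = of_nat N * of_nat k"
proof -
  obtain as where pr: "proots (char_poly (adj_matrix N E)) = mset as" and len: "length as = N"
    and s1: "sum_list as = tr (adj_matrix N E)" and s2: "sum_list (map (\<lambda>x. x^2) as) = tr (adj_matrix N E * adj_matrix N E)"
    and ev: "\<forall>x \<in> set as. eigenvalue (adj_matrix N E) x"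
    using roots_schur[OF adj_carrier] by blast
  have M: "adj_spectrum N E = mset as" unfolding adj_spectrum_def pr ..
  show "size (adj_spectrum N E) = N" unfolding M using len by simp
  show "\<forall>x \<in># adj_spectrum N E. (x - of_nat k) * (x^2 - (of_nat e - of_nat d) * x - (of_nat k - of_nat d)) = 0"
    unfolding M using ev eigen_cubic[OF S] by auto
  show "sum_mset (adj_spectrum N E) = 0" unfolding M using s1 tr_A[OF S] by (simp add: sum_mset_sum_list)
  show "sum_mset (image_mset (\<lambda>x. x^2) (adj_spectrum N E)) = of_nat N * of_nat k"
    unfolding M using s2 tr_A[OF S] by (simp add: sum_mset_sum_list flip: mset_map)
qed



lemma nb_fin: "finite {x. x < (N::nat) \<and> P x}" by simp

lemma basic_bounds:
  assumes S: "srg_params N E k e d"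
  shows "1 \<le> k" "e + 1 \<le> k" "d \<le> k" "k + 2 \<le> N"
proof -
  have sg: "\<forall>i<N. \<forall>j<N. E i j \<longleftrightarrow> E j i" "\<forall>i<N. \<not> E i i" using S by (auto simp: srg_params_def simple_graph_def)
  have kk: "\<And>i. i < N \<Longrightarrow> card {x. x<N \<and> E i x} = k" using S by (auto simp: srg_params_def)
  obtain i j where ij: "i < N" "j < N" "E i j" using S by (auto simp: srg_params_def)
  have "j \<in> {x. x<N \<and> E i x}" using ij by auto
  hence "card {x. x<N \<and> E i x} > 0" using nb_fin by (metis card_gt_0_iff empty_iff)
  thus "1 \<le> k" using kk ij by simp
  have "{x. x<N \<and> E i x \<and> E j x} \<subseteq> {x. x<N \<and> E i x} - {j}" using sg ij by auto
  hence "card {x. x<N \<and> E i x \<and> E j x} \<le> card ({x. x<N \<and> E i x} - {j})" by (intro card_mono) auto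
  also have "\<dots> = k - 1" using ij kk by (simp add: card_Diff_singleton)
  finally show "e + 1 \<le> k" using S ij \<open>1 \<le> k\<close> by (auto simp: srg_params_def)
  obtain a b where ab: "a < N" "b < N" "a \<noteq> b" "\<not> E a b" using S by (auto simp: srg_params_def)
  have "card {x. x<N \<and> E a x \<and> E b x} \<le> card {x. x<N \<and> E a x}" by (intro card_mono) auto
  thus "d \<le> k" using S ab kk by (auto simp: srg_params_def)
  have "{x. x<N \<and> E a x} \<subseteq> {0..<N} - {a, b}" using ab sg by auto
  hence "card {x. x<N \<and> E a x} \<le> card ({0..<N} - {a, b})" by (intro card_mono) auto
  also have "\<dots> = N - 2" using ab by (subst card_Diff_subset) auto
  finally show "k + 2 \<le> N" using kk ab by simp
qed

lemma complement_srg: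
  assumes S: "srg_params N E k e d"
  shows "2 * k + 2 \<le> N + d" "2 * k \<le> N + e"
    "srg_params N (complement E) (N - k - 1) (N + d - 2 * k - 2) (N + e - 2 * k)"
proof -
  have sym: "\<And>i j. i<N \<Longrightarrow> j<N \<Longrightarrow> E i j \<longleftrightarrow> E j i" and irr: "\<And>i. i<N \<Longrightarrow> \<not> E i i"
    using S by (auto simp: srg_params_def simple_graph_def)
  have kk: "\<And>i. i < N \<Longrightarrow> card {x. x<N \<and> E i x} = k" using S by (auto simp: srg_params_def)
  have ee: "\<And>i j. i<N \<Longrightarrow> j<N \<Longrightarrow> E i j \<Longrightarrow> card {x. x<N \<and> E i x \<and> E j x} = e"
    using S by (auto simp: srg_params_def)
  have dd: "\<And>i j. i<N \<Longrightarrow> j<N \<Longrightarrow> i \<noteq> j \<Longrightarrow> \<not> E i j \<Longrightarrow> card {x. x<N \<and> E i x \<and> E j x} = d"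
    using S by (auto simp: srg_params_def)
  define Nb where "Nb i = {x. x<N \<and> E i x}" for i
  have finNb: "finite (Nb i)" for i unfolding Nb_def by simp
  have NbN: "Nb i \<subseteq> {0..<N}" for i unfolding Nb_def by auto
  have un: "card (Nb i \<union> Nb j) + card {x. x<N \<and> E i x \<and> E j x} = 2 * k" if "i < N" "j < N" for i j
  proof -
    have "card (Nb i \<union> Nb j) + card (Nb i \<inter> Nb j) = card (Nb i) + card (Nb j)"
      using card_Un_Int[OF finNb finNb, of i j] by simp
    moreover have "Nb i \<inter> Nb j = {x. x<N \<and> E i x \<and> E j x}" unfolding Nb_def by auto
    ultimately show ?thesis using kk that unfolding Nb_def by simp
  qed
  have deg: "card {x. x<N \<and> complement E i x} = N - k - 1" if i: "i < N" for i
  proof -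
    have "{x. x<N \<and> complement E i x} = {0..<N} - insert i (Nb i)"
      unfolding Nb_def complement_def by auto
    moreover have "card (insert i (Nb i)) = k + 1" using kk[OF i] irr[OF i] finNb unfolding Nb_def by simp
    moreover have "insert i (Nb i) \<subseteq> {0..<N}" using NbN i by auto
    ultimately show ?thesis using finNb by (simp add: card_Diff_subset)
  qed
  obtain a b where ab: "a < N" "b < N" "a \<noteq> b" "\<not> E a b" using S by (auto simp: srg_params_def)
  obtain a' b' where ab': "a' < N" "b' < N" "E a' b'" using S by (auto simp: srg_params_def)
  have cadj: "card {x. x<N \<and> complement E i x \<and> complement E j x} + 2 * k + 2 = N + d \<and> 2 * k + 2 \<le> N + d"
    if ij: "i < N" "j < N" "i \<noteq> j" "\<not> E i j" for i j
  proof -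
    have eq: "{x. x<N \<and> complement E i x \<and> complement E j x} = {0..<N} - insert i (insert j (Nb i \<union> Nb j))"
      unfolding Nb_def complement_def by auto
    have c1: "card (insert i (insert j (Nb i \<union> Nb j))) = card (Nb i \<union> Nb j) + 2"
      using ij sym irr finNb unfolding Nb_def by auto
    have sub: "insert i (insert j (Nb i \<union> Nb j)) \<subseteq> {0..<N}" using ij NbN by auto
    have c2: "card {x. x<N \<and> complement E i x \<and> complement E j x} = N - card (insert i (insert j (Nb i \<union> Nb j)))"
      unfolding eq using sub finNb by (subst card_Diff_subset) auto
    have "card (insert i (insert j (Nb i \<union> Nb j))) \<le> N" using sub by (metis card_atLeastLessThan card_mono finite_atLeastLessThan diff_zero)
    thus ?thesis using c1 c2 un[OF ij(1,2)] dd[OF ij] by linarith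
  qed
  have cnon: "card {x. x<N \<and> complement E i x \<and> complement E j x} + 2 * k = N + e \<and> 2 * k \<le> N + e"
    if ij: "i < N" "j < N" "E i j" for i j
  proof -
    have eq: "{x. x<N \<and> complement E i x \<and> complement E j x} = {0..<N} - (Nb i \<union> Nb j)"
      using ij sym unfolding Nb_def complement_def by auto
    have sub: "Nb i \<union> Nb j \<subseteq> {0..<N}" using NbN by auto
    have c2: "card {x. x<N \<and> complement E i x \<and> complement E j x} = N - card (Nb i \<union> Nb j)"
      unfolding eq using sub finNb by (simp add: card_Diff_subset)
    have "card (Nb i \<union> Nb j) \<le> N" using sub by (metis card_atLeastLessThan card_mono finite_atLeastLessThan diff_zero)
    thus ?thesis using c2 un[OF ij(1,2)] ee[OF ij] by linarith
  qed
  show "2 * k + 2 \<le> N + d" using cadj[OF ab] by simp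
  show "2 * k \<le> N + e" using cnon[OF ab'] by simp
  show "srg_params N (complement E) (N - k - 1) (N + d - 2 * k - 2) (N + e - 2 * k)"
    unfolding srg_params_def simple_graph_def
  proof (intro conjI allI impI)
    show "\<exists>i<N. \<exists>j<N. complement E i j" using ab by (auto simp: complement_def)
    show "\<exists>i<N. \<exists>j<N. i \<noteq> j \<and> \<not> complement E i j" using ab' irr by (auto simp: complement_def)
  next
    fix i j assume "i < N" "j < N" thus "complement E i j = complement E j i" using sym by (auto simp: complement_def)
  next
    fix i assume "i < N" thus "\<not> complement E i i" by (simp add: complement_def)
  next
    fix i assume "i < N" thus "card {x. x < N \<and> complement E i x} = N - k - 1" by (rule deg)
  next
    fix i j assume "i < N" "j < N" "complement E i j"
    thus "card {x. x < N \<and> complement E i x \<and> complement E j x} = N + d - 2 * k - 2"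
      using cadj[of i j] by (auto simp: complement_def)
  next
    fix i j assume "i < N" "j < N" "i \<noteq> j \<and> \<not> complement E i j"
    thus "card {x. x < N \<and> complement E i x \<and> complement E j x} = N + e - 2 * k"
      using cnon[of i j] by (auto simp: complement_def)
  qed
qed



lemma lin_sum: "sum_list (map (\<lambda>x. (x::real) + C * (x^2 - u * x + w)) xs)
   = sum_list xs + C * (sum_list (map (\<lambda>x. x^2) xs) - u * sum_list xs + w * length xs)"
  by (induct xs) (auto simp: algebra_simps)

lemma energy_formula:
  fixes xs :: "real list"
  assumes el: "\<forall>x\<in>set xs. x = a \<or> x = b \<or> x = c" and a: "a \<ge> 0" and b: "b \<ge> 0" and c: "c < 0"
    and s1: "sum_list xs = 0" and s2: "sum_list (map (\<lambda>x. x^2) xs) = q"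
  shows "sum_list (map abs xs) = -2*c*(q + a*b*length xs)/((c-a)*(c-b))"
proof -
  define C where "C = -2*c/((c-a)*(c-b))"
  have ca: "c - a \<noteq> 0" "c - b \<noteq> 0" using a b c by auto
  have pt: "\<bar>x\<bar> = x + C * (x^2 - (a+b) * x + a*b)" if "x \<in> set xs" for x
  proof -
    have "x = a \<or> x = b \<or> x = c" using el that by auto
    moreover have "c + C * (c^2 - (a+b) * c + a*b) = -c"
    proof -
      have "c^2 - (a+b) * c + a*b = (c-a)*(c-b)" by (simp add: algebra_simps power2_eq_square)
      thus ?thesis unfolding C_def using ca by simp
    qed
    ultimately show ?thesis using a b c by (auto simp: algebra_simps power2_eq_square)
  qed
  have "sum_list (map abs xs) = sum_list (map (\<lambda>x. x + C * (x^2 - (a+b) * x + a*b)) xs)"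
    by (rule arg_cong[where f=sum_list], rule map_cong) (auto simp: pt)
  also have "\<dots> = C * (q + a*b*length xs)" unfolding lin_sum s1 s2 by simp
  finally show ?thesis unfolding C_def by simp
qed

lemma count_sum: "real (count (mset xs) y) = sum_list (map (\<lambda>x. if x = y then 1 else 0) xs)"
  by (induct xs) auto

lemma lag:
  fixes a b c :: real
  assumes "a \<noteq> b" "a \<noteq> c" "b \<noteq> c"
  shows "\<exists>\<alpha> \<beta> \<gamma>. \<forall>x\<in>{a,b,c}. (if x = a then 1 else 0) = \<alpha>*x^2 + \<beta>*x + \<gamma>"
proof -
  define \<alpha> where "\<alpha> = 1/((a-b)*(a-c))"
  have 1: "\<forall>x\<in>{a,b,c}. (if x = a then 1 else 0) = \<alpha>*((x-b)*(x-c))"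
    using assms unfolding \<alpha>_def by auto
  have 2: "\<alpha>*((x-b)*(x-c)) = \<alpha>*x^2 + (-\<alpha>*(b+c))*x + \<alpha>*b*c" for x
    by (simp add: algebra_simps power2_eq_square)
  have "\<forall>x\<in>{a,b,c}. (if x = a then 1 else 0) = \<alpha>*x^2 + (-\<alpha>*(b+c))*x + \<alpha>*b*c"
    using 1 unfolding 2 .
  thus ?thesis by blast
qed

lemma quad_sum: "sum_list (map (\<lambda>x. \<alpha>*x^2 + \<beta>*x + \<gamma>) xs)
   = \<alpha> * sum_list (map (\<lambda>x. (x::real)^2) xs) + \<beta> * sum_list xs + \<gamma> * length xs"
  by (induct xs) (auto simp: algebra_simps)

lemma uniq_mset:
  fixes xs ys :: "real list"
  assumes d: "a \<noteq> b" "a \<noteq> c" "b \<noteq> c"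
    and ex: "\<forall>x\<in>set xs. x \<in> {a,b,c}" and ey: "\<forall>x\<in>set ys. x \<in> {a,b,c}"
    and l: "length xs = length ys" and s1: "sum_list xs = sum_list ys"
    and s2: "sum_list (map (\<lambda>x. x^2) xs) = sum_list (map (\<lambda>x. x^2) ys)"
  shows "mset xs = mset ys"
proof (rule multiset_eqI)
  fix y
  show "count (mset xs) y = count (mset ys) y"
  proof (cases "y \<in> {a,b,c}")
    case False
    have n1: "y \<notin> set xs" using ex False by auto
    have n2: "y \<notin> set ys" using ey False by auto
    have "count (mset xs) y = 0" using n1 by (metis count_eq_zero_iff set_mset_mset)
    moreover have "count (mset ys) y = 0" using n2 by (metis count_eq_zero_iff set_mset_mset)
    ultimately show ?thesis by linarith
  next
    case True
    have "\<exists>\<alpha> \<beta> \<gamma>. \<forall>x\<in>{a,b,c}. (if x = y then 1 else 0) = \<alpha>*x^2 + \<beta>*x + \<gamma>"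
    proof -
      consider "y = a" | "y = b" | "y = c" using True by auto
      then show ?thesis
      proof cases
        case 1 then show ?thesis using lag[OF d] by simp
      next
        case 2
        have "{b,a,c} = {a,b,c}" by auto
        then show ?thesis using lag[of b a c] d 2 by force
      next
        case 3
        have "{c,a,b} = {a,b,c}" by auto
        then show ?thesis using lag[of c a b] d 3 by force
      qed
    qed
    then obtain \<alpha> \<beta> \<gamma> where L: "\<forall>x\<in>{a,b,c}. (if x = y then 1 else 0) = \<alpha>*x^2 + \<beta>*x + \<gamma>" by blast
    have "real (count (mset zs) y) = \<alpha> * sum_list (map (\<lambda>x. x^2) zs) + \<beta> * sum_list zs + \<gamma> * length zs"
      if "\<forall>x\<in>set zs. x \<in> {a,b,c}" for zs
    proof -
      have "real (count (mset zs) y) = sum_list (map (\<lambda>x. \<alpha>*x^2 + \<beta>*x + \<gamma>) zs)"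
        unfolding count_sum by (rule arg_cong[where f=sum_list], rule map_cong) (use L that in auto)
      thus ?thesis unfolding quad_sum .
    qed
    from this[OF ex] this[OF ey] show ?thesis using l s1 s2 by simp
  qed
qed

lemma rat_root_int:
  fixes x :: real and b c :: int
  assumes "x \<in> \<rat>" and eq: "x^2 + of_int b * x + of_int c = 0"
  shows "\<exists>z::int. x = of_int z"
proof -
  obtain p q :: int where q: "q > 0" and cop: "coprime p q" and x: "x = of_int p / of_int q"
    using assms(1) by (rule Rats_cases') blast
  have "of_int (p^2 + b*p*q + c*q^2) = (of_int q)^2 * (x^2 + of_int b * x + of_int c)"
    using q unfolding x by (simp add: field_simps power2_eq_square)
  hence "(of_int (p^2 + b*p*q + c*q^2)::real) = 0" using eq by simp
  hence "p^2 + b*p*q + c*q^2 = 0" by (simp only: of_int_eq_0_iff)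
  hence "p^2 = q * (- b*p - c*q)" by (simp add: algebra_simps power2_eq_square)
  hence qd: "q dvd p^2" by simp
  have cp2: "coprime (p^2) q" using cop by simp
  have "is_unit q" by (rule coprime_common_divisor[OF cp2 qd dvd_refl])
  hence "q \<le> 1" using zdvd_imp_le by auto
  hence "q = 1" using q by simp
  thus ?thesis using x by auto
qed



definition rr :: "real \<Rightarrow> real \<Rightarrow> real \<Rightarrow> real" where
  "rr k e d = ((e - d) + sqrt ((e - d)^2 + 4 * (k - d))) / 2"
definition ss :: "real \<Rightarrow> real \<Rightarrow> real \<Rightarrow> real" where
  "ss k e d = ((e - d) - sqrt ((e - d)^2 + 4 * (k - d))) / 2"

lemma root_facts:
  fixes k e d :: real
  assumes dk: "d \<le> k" and ek: "e + 1 \<le> k"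
  shows "rr k e d + ss k e d = e - d" "rr k e d * ss k e d = d - k" "rr k e d \<ge> 0" "ss k e d \<le> -1"
proof -
  define D where "D = (e - d)^2 + 4 * (k - d)"
  have D0: "D \<ge> (e-d)^2" using dk unfolding D_def by simp
  hence D00: "D \<ge> 0" by (meson order.trans zero_le_power2)
  have sq: "sqrt D ^ 2 = D" using D00 by simp
  have sab: "sqrt D \<ge> \<bar>e - d\<bar>" using real_sqrt_le_mono[OF D0] by simp
  show 1: "rr k e d + ss k e d = e - d" unfolding rr_def ss_def by (simp add: field_simps)
  have "rr k e d * ss k e d = ((e-d)^2 - (sqrt D)^2) / 4" unfolding rr_def ss_def D_def[symmetric]
    by (simp add: field_simps power2_eq_square)
  also have "\<dots> = ((e-d)^2 - D) / 4" by (simp only: sq)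
  also have "\<dots> = d - k" unfolding D_def by simp
  finally show 2: "rr k e d * ss k e d = d - k" .
  show 3: "rr k e d \<ge> 0" unfolding rr_def D_def[symmetric] using sab by simp
  have "(-1 - rr k e d) * (-1 - ss k e d) = 1 + (rr k e d + ss k e d) + rr k e d * ss k e d"
    by (simp add: algebra_simps)
  also have "\<dots> \<le> 0" unfolding 1 2 using ek by simp
  finally have p: "(-1 - rr k e d) * (-1 - ss k e d) \<le> 0" .
  show "ss k e d \<le> -1"
  proof (rule ccontr)
    assume "\<not> ss k e d \<le> -1"
    hence h: "-1 - ss k e d < 0" by simp
    have "-1 - rr k e d < 0" using 3 by simp
    from this h have "(-1 - rr k e d) * (-1 - ss k e d) > 0" by (rule mult_neg_neg)
    thus False using p by simp
  qed
qed

lemma rr_ss_compl: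
  fixes N k e d :: real
  shows "rr (N - k - 1) (N + d - 2*k - 2) (N + e - 2*k) = -1 - ss k e d"
        "ss (N - k - 1) (N + d - 2*k - 2) (N + e - 2*k) = -1 - rr k e d"
proof -
  have D: "((N + d - 2*k - 2) - (N + e - 2*k))^2 + 4 * ((N - k - 1) - (N + e - 2*k)) = (e - d)^2 + 4 * (k - d)"
    by (simp add: algebra_simps power2_eq_square)
  show "rr (N - k - 1) (N + d - 2*k - 2) (N + e - 2*k) = -1 - ss k e d"
    unfolding rr_def ss_def D by (simp add: field_simps)
  show "ss (N - k - 1) (N + d - 2*k - 2) (N + e - 2*k) = -1 - rr k e d"
    unfolding rr_def ss_def D by (simp add: field_simps)
qed

lemma sum_list_of_real: "sum_list (map complex_of_real xs) = complex_of_real (sum_list xs)"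
  by (induct xs) auto

lemma sum_list_of_real_f: "sum_list (map (\<lambda>x. complex_of_real (f x)) xs) = complex_of_real (sum_list (map f xs))"
  by (induct xs) auto

lemma spec_list:
  assumes S: "srg_params N E k e d"
  shows "\<exists>xs. adj_spectrum N E = mset (map complex_of_real xs) \<and> length xs = N \<and> sum_list xs = 0
     \<and> sum_list (map (\<lambda>x. x^2) xs) = real N * real k
     \<and> (\<forall>x\<in>set xs. x = real k \<or> x = rr k e d \<or> x = ss k e d)
     \<and> energy N E = sum_list (map abs xs)"
proof -
  note B = basic_bounds[OF S]
  let ?R = "rr k e d" and ?S = "ss k e d"
  note RF = root_facts[of "real d" "real k" "real e"]
  have RS1: "?R + ?S = real e - real d" and RS2: "?R * ?S = real d - real k"
    using RF B by auto
  note sp = spectral[OF S]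
  let ?M = "adj_spectrum N E"
  have el: "x = of_real (real k) \<or> x = of_real ?R \<or> x = of_real ?S" if x: "x \<in># ?M" for x
  proof -
    have "(x - of_nat k) * (x^2 - (of_nat e - of_nat d) * x - (of_nat k - of_nat d)) = 0"
      using sp(2) x by blast
    moreover have "x^2 - (of_nat e - of_nat d) * x - (of_nat k - of_nat d) = (x - of_real ?R) * (x - of_real ?S)"
    proof -
      have "(x - of_real ?R) * (x - of_real ?S) = x^2 - of_real (?R + ?S) * x + of_real (?R * ?S)"
        by (simp add: algebra_simps power2_eq_square)
      also have "\<dots> = x^2 - (of_nat e - of_nat d) * x - (of_nat k - of_nat d)"
        unfolding RS1 RS2 by simp
      finally show ?thesis by simp
    qed
    ultimately show ?thesis by auto
  qed
  obtain ys where ys: "mset ys = ?M" using ex_mset by blast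
  define xs where "xs = map Re ys"
  have "map (\<lambda>y. complex_of_real (Re y)) ys = ys"
  proof (rule map_idI)
    fix y assume "y \<in> set ys"
    hence "y \<in># ?M" using ys by (metis set_mset_mset)
    from el[OF this] show "complex_of_real (Re y) = y" by (metis Re_complex_of_real)
  qed
  hence yx: "ys = map complex_of_real xs" unfolding xs_def by (simp add: o_def)
  have M: "?M = mset (map complex_of_real xs)" using ys yx by simp
  have len: "length xs = N" using sp(1) M by (metis size_mset length_map)
  have s1: "sum_list xs = 0"
  proof -
    have "complex_of_real (sum_list xs) = 0" using sp(3) unfolding M
      by (simp add: sum_mset_sum_list sum_list_of_real del: mset_map)
    thus ?thesis by simp
  qed
  have s2: "sum_list (map (\<lambda>x. x^2) xs) = real N * real k"
  proof -
    have e1: "(\<Sum>x\<leftarrow>xs. (complex_of_real x)^2) = complex_of_real (sum_list (map power2 xs))"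
      by (induct xs) auto
    have "(\<Sum>x\<leftarrow>xs. (complex_of_real x)^2) = of_nat N * of_nat k" using sp(4) unfolding M
      by (simp add: multiset.map_comp o_def sum_mset_sum_list flip: mset_map)
    hence "complex_of_real (sum_list (map (\<lambda>x. x^2) xs)) = of_nat N * of_nat k" using e1 by simp
    thus ?thesis by (metis of_real_eq_iff of_real_mult of_real_of_nat_eq)
  qed
  have elx: "\<forall>x\<in>set xs. x = real k \<or> x = ?R \<or> x = ?S"
  proof
    fix x assume "x \<in> set xs"
    hence "complex_of_real x \<in># ?M" unfolding M by simp
    from el[OF this] show "x = real k \<or> x = ?R \<or> x = ?S" by (metis of_real_eq_iff)
  qed
  have en: "energy N E = sum_list (map abs xs)"
  proof -
    have "image_mset cmod (mset (map complex_of_real xs)) = mset (map abs xs)" by (simp add: multiset.map_comp o_def)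
    thus ?thesis unfolding energy_def M by (simp add: sum_mset_sum_list del: mset_map)
  qed
  show ?thesis using M len s1 s2 elx en by blast
qed



lemma compl_list:
  assumes S: "srg_params N E k e d"
  shows "\<exists>ys. adj_spectrum N (complement E) = mset (map complex_of_real ys) \<and> length ys = N \<and> sum_list ys = 0
     \<and> sum_list (map (\<lambda>x. x^2) ys) = real N * (real N - real k - 1)
     \<and> (\<forall>x\<in>set ys. x = real N - real k - 1 \<or> x = -1 - ss k e d \<or> x = -1 - rr k e d)
     \<and> energy N (complement E) = sum_list (map abs ys)"
proof -
  note B = basic_bounds[OF S]
  note C = complement_srg[OF S]
  have r1: "real (N - k - 1) = real N - real k - 1" using B by simp
  have r2: "real (N + d - 2 * k - 2) = real N + real d - 2 * real k - 2" using C(1) by simp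
  have r3: "real (N + e - 2 * k) = real N + real e - 2 * real k" using C(2) by simp
  from spec_list[OF C(3)] obtain ys where ys: "adj_spectrum N (complement E) = mset (map complex_of_real ys)"
    "length ys = N" "sum_list ys = 0" "sum_list (map (\<lambda>x. x^2) ys) = real N * real (N - k - 1)"
    "\<forall>x\<in>set ys. x = real (N - k - 1) \<or> x = rr (real (N - k - 1)) (real (N + d - 2 * k - 2)) (real (N + e - 2 * k))
       \<or> x = ss (real (N - k - 1)) (real (N + d - 2 * k - 2)) (real (N + e - 2 * k))"
    "energy N (complement E) = sum_list (map abs ys)" by blast
  note ys' = ys[unfolded r1 r2 r3 rr_ss_compl]
  show ?thesis using ys' by blast
qed

lemma energy_iff:
  assumes S: "srg_params N E k e d"
  shows "energy N E = energy N (complement E) \<longleftrightarrow>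
     real k * (1 + rr k e d + (real N - real k - 1)) = (real N - real k - 1) * (real k - ss k e d)"
proof -
  note B = basic_bounds[OF S]
  define R where "R = rr k e d"
  define Sg where "Sg = ss k e d"
  define K where "K = real k"
  define K' where "K' = real N - real k - 1"
  define n where "n = real N"
  have RF: "R \<ge> 0" "Sg \<le> -1" using root_facts[of "real d" "real k" "real e"] B unfolding R_def Sg_def by auto
  have K0: "K \<ge> 1" "K' \<ge> 1" "n \<ge> 1" using B unfolding K_def K'_def n_def by auto
  obtain xs where xs: "length xs = N" "sum_list xs = 0" "sum_list (map (\<lambda>x. x^2) xs) = real N * real k"
    "\<forall>x\<in>set xs. x = real k \<or> x = R \<or> x = Sg" "energy N E = sum_list (map abs xs)"
    using spec_list[OF S] unfolding R_def Sg_def by blast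
  obtain ys where ys: "length ys = N" "sum_list ys = 0" "sum_list (map (\<lambda>x. x^2) ys) = real N * K'"
    "\<forall>x\<in>set ys. x = K' \<or> x = -1 - Sg \<or> x = -1 - R" "energy N (complement E) = sum_list (map abs ys)"
    using compl_list[OF S] unfolding R_def Sg_def K'_def by blast
  have E1: "energy N E = -2*Sg*(n*K + K*R*n)/((Sg-K)*(Sg-R))"
    using energy_formula[OF xs(4) _ RF(1) _ xs(2) xs(3)] K0 RF xs(1) xs(5) unfolding K_def n_def by simp
  have E2: "energy N (complement E) = -2*(-1-R)*(n*K' + K'*(-1-Sg)*n)/((-1-R-K')*((-1-R)-(-1-Sg)))"
    using energy_formula[OF ys(4) _ _ _ ys(2) ys(3)] K0 RF ys(1) ys(5) unfolding n_def by simp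
  have nz: "Sg - K \<noteq> 0" "Sg - R \<noteq> 0" "-1-R-K' \<noteq> 0" "n \<noteq> 0" "1 + R \<noteq> 0" "Sg \<noteq> 0"
    using K0 RF by auto
  define F where "F = -2*n*(1+R)*Sg/(Sg-R)"
  have f0: "F \<noteq> 0" using nz unfolding F_def by simp
  have E1': "energy N E = F * (K/(Sg-K))" unfolding E1 F_def using nz by (simp add: field_simps)
  have E2': "energy N (complement E) = F * (K'/(-1-R-K'))" unfolding E2 F_def using nz
    by (simp add: field_simps)
  have "energy N E = energy N (complement E) \<longleftrightarrow> K/(Sg-K) = K'/(-1-R-K')"
    unfolding E1' E2' using f0 by (simp only: mult_cancel_left) simp
  also have "\<dots> \<longleftrightarrow> K*(-1-R-K') = K'*(Sg-K)" using nz by (simp add: field_simps)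
  also have "\<dots> \<longleftrightarrow> K * (1 + R + K') = K' * (K - Sg)" by (simp add: algebra_simps) linarith
  finally show ?thesis unfolding K_def K'_def R_def Sg_def .
qed

lemma iso_imp:
  assumes S: "srg_params N E k e d" and I: "isospectral N E N (complement E)"
  shows "N = 2 * k + 1"
proof -
  note B = basic_bounds[OF S]
  note C = complement_srg[OF S]
  have a: "sum_mset (image_mset (\<lambda>x. x^2) (adj_spectrum N E)) = of_nat N * of_nat k" by (rule spectral(4)[OF S])
  have b: "sum_mset (image_mset (\<lambda>x. x^2) (adj_spectrum N (complement E))) = of_nat N * of_nat (N-k-1)"
    by (rule spectral(4)[OF C(3)])
  have "(of_nat N * of_nat k :: complex) = of_nat N * of_nat (N - k - 1)"
    using a b I unfolding isospectral_def by metis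
  hence "N * k = N * (N - k - 1)" by (metis of_nat_eq_iff of_nat_mult)
  hence "k = N - k - 1" using B by auto
  thus ?thesis using B by simp
qed

lemma iso_conf:
  assumes S: "srg_params N E k e d" and N: "N = 2 * k + 1" and ed: "e + 1 = d"
    and kr: "real k \<noteq> rr k e d"
  shows "isospectral N E N (complement E)"
proof -
  note B = basic_bounds[OF S]
  note C = complement_srg[OF S]
  have p: "N - k - 1 = k" "N + d - 2 * k - 2 = e" "N + e - 2 * k = d" using N ed by auto
  have S2: "srg_params N (complement E) k e d" using C(3) unfolding p .
  have RF: "rr k e d \<ge> 0" "ss k e d \<le> -1" using root_facts[of "real d" "real k" "real e"] B by auto
  obtain xs where xs: "adj_spectrum N E = mset (map complex_of_real xs)" "length xs = N" "sum_list xs = 0"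
    "sum_list (map (\<lambda>x. x^2) xs) = real N * real k"
    "\<forall>x\<in>set xs. x = real k \<or> x = rr k e d \<or> x = ss k e d"
    using spec_list[OF S] by blast
  obtain ys where ys: "adj_spectrum N (complement E) = mset (map complex_of_real ys)" "length ys = N" "sum_list ys = 0"
    "sum_list (map (\<lambda>x. x^2) ys) = real N * real k"
    "\<forall>x\<in>set ys. x = real k \<or> x = rr k e d \<or> x = ss k e d"
    using spec_list[OF S2] by blast
  have "mset xs = mset ys"
    by (rule uniq_mset[of "real k" "rr k e d" "ss k e d"]) (use kr RF B xs ys in auto)
  hence "mset (map complex_of_real xs) = mset (map complex_of_real ys)" by simp
  thus ?thesis unfolding isospectral_def xs(1) ys(1) .
qed



theorem mainTheorem14:
  fixes N :: nat and E :: "nat \<Rightarrow> nat \<Rightarrow> bool"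
  assumes "strongly_regular N E"
  shows "(energy N E = energy N (complement E) \<and>
          \<not> isospectral N E N (complement E))
     \<longleftrightarrow> (\<exists>n m :: nat. n > 0 \<and> m > 0 \<and> m \<noteq> n + 1 \<and> 2 * m \<noteq> n + 1 \<and>
           (\<exists>k e d. srg_params N E k e d \<and> N = n ^ 2 \<and> k = m * (n - 1) \<and>
              int e = int m ^ 2 - 3 * int m + int n \<and> d = m * (m - 1)))"
proof
  assume H: "energy N E = energy N (complement E) \<and> \<not> isospectral N E N (complement E)"
  obtain k e d where S: "srg_params N E k e d" using assms unfolding strongly_regular_def by blast
  note B = basic_bounds[OF S]
  define R where "R = rr k e d"
  define Sg where "Sg = ss k e d"
  define K' where "K' = real N - real k - 1"
  have RF: "R + Sg = real e - real d" "R * Sg = real d - real k" "R \<ge> 0" "Sg \<le> -1"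
    using root_facts[of "real d" "real k" "real e"] B unfolding R_def Sg_def by auto
  have K'1: "K' \<ge> 1" using B unfolding K'_def by simp
  have eq1: "real k * (1 + R + K') = K' * (real k - Sg)"
    using energy_iff[OF S] H unfolding R_def Sg_def K'_def by simp
  have h1: "real k * (1 + R) = - K' * Sg" using eq1 by (simp add: algebra_simps)
  have idr: "real k * (real k - real e - 1) = K' * real d"
  proof -
    have "real_of_int (int k * (int k - int e - 1)) = real_of_int ((int N - int k - 1) * int d)"
      using srg_identity[OF S] by simp
    thus ?thesis unfolding K'_def by simp
  qed
  have e_eq: "real e = real k + R*Sg + R + Sg" and d_eq: "real d = real k + R*Sg" using RF by linarith+
  have kk: "real k * (real k - real e - 1) = -(real k * (1+R)) * (1 + Sg)"
    by (simp add: e_eq algebra_simps)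
  have "K' * (Sg * (1 + Sg)) = K' * (real k + R * Sg)"
  proof -
    have "K' * (Sg * (1 + Sg)) = -(real k * (1+R)) * (1 + Sg)" unfolding h1 by (simp add: algebra_simps)
    also have "\<dots> = K' * real d" using kk idr by simp
    also have "\<dots> = K' * (real k + R * Sg)" using d_eq by simp
    finally show ?thesis .
  qed
  hence "Sg * (1 + Sg) = real k + R * Sg" using K'1 by simp
  hence kS: "real k = Sg * (1 + Sg - R)" by (simp add: algebra_simps)
  have "Sg * (-(1 + Sg - R) * (1 + R)) = Sg * K'"
    using h1 unfolding kS by (simp add: algebra_simps)
  hence K'S: "K' = -(1 + Sg - R) * (1 + R)" using RF by simp
  have NN: "real N = (R - Sg)^2"
  proof -
    have "real N = real k + K' + 1" unfolding K'_def by simp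
    also have "\<dots> = (R - Sg)^2" unfolding kS K'S by (simp add: algebra_simps power2_eq_square)
    finally show ?thesis .
  qed
  show "\<exists>n m :: nat. n > 0 \<and> m > 0 \<and> m \<noteq> n + 1 \<and> 2 * m \<noteq> n + 1 \<and>
           (\<exists>k e d. srg_params N E k e d \<and> N = n ^ 2 \<and> k = m * (n - 1) \<and>
              int e = int m ^ 2 - 3 * int m + int n \<and> d = m * (m - 1))"
  proof (cases "e + 1 = d")
    case True
    have t: "R + Sg = -1" using RF(1) True by simp
    hence Rv: "R = -1 - Sg" by simp
    have "real N = 2 * real k + 1" unfolding NN kS Rv by (simp add: algebra_simps power2_eq_square)
    hence N2: "N = 2 * k + 1" by linarith
    have kr: "real k \<noteq> rr k e d"
    proof
      assume "real k = rr k e d"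
      hence "Sg * (1 + Sg - R) = R" using kS unfolding R_def by simp
      hence "(1 + Sg) * (2 * Sg + 1) = 0" unfolding Rv by (simp add: algebra_simps)
      moreover have "2 * Sg + 1 \<noteq> 0" using RF by simp
      ultimately have "Sg = -1" by simp
      hence "real k = 0" using kS Rv by simp
      thus False using B by simp
    qed
    have "isospectral N E N (complement E)" by (rule iso_conf[OF S N2 True kr])
    thus ?thesis using H by blast
  next
    case False
    have t: "1 + real e - real d \<noteq> 0"
    proof
      assume "1 + real e - real d = 0"
      hence "real (e + 1) = real d" by simp
      hence "e + 1 = d" by (simp only: of_nat_eq_iff)
      thus False using False by simp
    qed
    have e2: "real e = Sg*(1+Sg-R) + R*Sg + R + Sg" by (simp only: e_eq kS)
    have d2: "real d = Sg*(1+Sg-R) + R*Sg" by (simp only: d_eq kS)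
    have "(1 + real e - real d) * Sg = 2 * real d - real k"
      unfolding e2 d2 kS by (simp add: algebra_simps)
    hence Sq: "Sg = (2 * real d - real k) / (1 + real e - real d)" using t by (simp add: field_simps)
    have SQ: "Sg \<in> \<rat>" unfolding Sq by (intro Rats_divide Rats_diff Rats_add Rats_mult) auto
    have quad: "Sg^2 + of_int (int d - int e) * Sg + of_int (int d - int k) = 0"
    proof -
      have a: "(of_int (int d - int e)::real) = - (R + Sg)" using RF(1) by simp
      have b: "(of_int (int d - int k)::real) = R * Sg" using RF(2) by simp
      show ?thesis by (simp only: a b) (simp add: algebra_simps power2_eq_square)
    qed
    obtain z where z: "Sg = of_int z" using rat_root_int[OF SQ quad] by blast
    have Rz: "R = of_int (int e - int d - z)" using RF(1) z by simp
    define m where "m = nat (- z)"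
    define n where "n = nat (int e - int d - 2 * z)"
    have zz: "- z \<ge> 1" using RF(4) z by simp
    have mr: "real m = - Sg" unfolding m_def z using zz by simp
    have nn: "int e - int d - 2 * z \<ge> 1" using RF(3) RF(4) z Rz by simp
    have nr: "real n = R - Sg" unfolding n_def using nn z Rz by simp
    have m1: "m \<ge> 1" using zz unfolding m_def by simp
    have n1: "n \<ge> 1" using nn unfolding n_def by simp
    have Rn: "R = real n - real m" and Sm: "Sg = - real m" using mr nr by simp_all
    have kreal: "real k = real m * (real n - 1)" unfolding kS Rn Sm by (simp add: algebra_simps)
    show ?thesis
    proof (intro exI conjI)
      show "n > 0" "m > 0" using m1 n1 by auto
      show "m \<noteq> n + 1"
      proof
        assume "m = n + 1"
        hence "real m = real n + 1" by simp
        thus False using Rn RF(3) by simp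
      qed
      show "2 * m \<noteq> n + 1"
      proof
        assume "2 * m = n + 1"
        hence "2 * real m = real n + 1" by (metis of_nat_1 of_nat_add of_nat_mult of_nat_numeral)
        hence "R + Sg = -1" using Rn Sm by simp
        hence "1 + real e - real d = 0" using RF(1) by simp
        thus False using t by simp
      qed
      show "srg_params N E k e d" by (rule S)
      show "N = n ^ 2"
      proof -
        have "real N = real (n ^ 2)" unfolding NN using nr by simp
        thus ?thesis by (simp only: of_nat_eq_iff)
      qed
      show "k = m * (n - 1)"
      proof -
        have "real k = real (m * (n - 1))" unfolding kreal using n1 by (simp add: of_nat_diff)
        thus ?thesis by (simp only: of_nat_eq_iff)
      qed
      show "int e = int m ^ 2 - 3 * int m + int n"
      proof -
        have "real e = real m ^ 2 - 3 * real m + real n"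
          unfolding e_eq kreal Rn Sm by (simp add: algebra_simps power2_eq_square)
        hence "real_of_int (int e) = real_of_int (int m ^ 2 - 3 * int m + int n)" by simp
        thus ?thesis by (simp only: of_int_eq_iff)
      qed
      show "d = m * (m - 1)"
      proof -
        have "real d = real (m * (m - 1))"
          unfolding d_eq kreal Rn Sm using m1 by (simp add: of_nat_diff algebra_simps)
        thus ?thesis by (simp only: of_nat_eq_iff)
      qed
    qed
  qed
next
  assume "\<exists>n m :: nat. n > 0 \<and> m > 0 \<and> m \<noteq> n + 1 \<and> 2 * m \<noteq> n + 1 \<and>
           (\<exists>k e d. srg_params N E k e d \<and> N = n ^ 2 \<and> k = m * (n - 1) \<and>
              int e = int m ^ 2 - 3 * int m + int n \<and> d = m * (m - 1))"
  then obtain n m k e d where n0: "n > 0" and m0: "m > 0" and mn1: "m \<noteq> n + 1" and mn2: "2 * m \<noteq> n + 1"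
    and S: "srg_params N E k e d" and Nn: "N = n ^ 2" and kmn: "k = m * (n - 1)"
    and emn: "int e = int m ^ 2 - 3 * int m + int n" and dm: "d = m * (m - 1)" by blast
  note B = basic_bounds[OF S]
  have rN: "real N = real n ^ 2" using Nn by simp
  have rk: "real k = real m * real n - real m" using kmn n0 by (simp add: of_nat_diff algebra_simps)
  have re: "real e = real m ^ 2 - 3 * real m + real n"
  proof -
    have "real_of_int (int e) = real_of_int (int m ^ 2 - 3 * int m + int n)" using emn by simp
    thus ?thesis by simp
  qed
  have rd: "real d = real m ^ 2 - real m" using dm m0 by (simp add: of_nat_diff algebra_simps power2_eq_square)
  have D: "(real e - real d)^2 + 4 * (real k - real d) = (real n)^2"
    unfolding re rd rk by (simp add: algebra_simps power2_eq_square)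
  have R: "rr k e d = real n - real m" unfolding rr_def D by (simp add: re rd)
  have Sg: "ss k e d = - real m" unfolding ss_def D by (simp add: re rd)
  have EE: "energy N E = energy N (complement E)"
    unfolding energy_iff[OF S] R Sg by (simp add: rN rk algebra_simps power2_eq_square)
  have NI: "\<not> isospectral N E N (complement E)"
  proof
    assume "isospectral N E N (complement E)"
    hence "N = 2 * k + 1" by (rule iso_imp[OF S])
    hence "real N = 2 * real k + 1" by simp
    hence "(real n - 1) * (real n + 1 - 2 * real m) = 0" unfolding rN rk by (simp add: algebra_simps power2_eq_square)
    hence "real n = 1 \<or> real n + 1 = 2 * real m" by simp
    moreover
    { assume "real n = 1"
      hence "n = 1" by simp
      hence "N = 1" using Nn by simp
      hence False using B by simp }
    moreover
    { assume "real n + 1 = 2 * real m"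
      hence "real (n + 1) = real (2 * m)" by simp
      hence "n + 1 = 2 * m" by (simp only: of_nat_eq_iff)
      hence False using mn2 by simp }
    ultimately show False by blast
  qed
  show "energy N E = energy N (complement E) \<and> \<not> isospectral N E N (complement E)" using EE NI by blast
qed


end
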